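(* Let $\mathcal C\subseteq(S^2)^n$ be any nonempty finite set and let $x,y$ be drawn independently and uniformly at random from $\mathcal C$. Then for every $S\subseteq[n]$, \[ \Pr\bigl[x_s\not\perp y_s\text{ for all } s\in S\bigr]\ \ge\ 3^{-|S|}. \]
   Context: $S^2$ is the unit sphere in $\mathbb R^3$; $x_s$ denotes the $s$-th coordinate (a unit vector in $\mathbb R^3$) of $x\in(S^2)^n$, and $u\not\perp v$ means $\langle u,v\rangle\ne0$. *)

theory Defs
  imports "HOL-Analysis.Analysis"
begin

text \<open>Points of (S^2)^n are represented as functions nat => real^3 whose
coordinates s < n are unit vectors and which are 0 at indices s >= n.\<close>

definition sphere_tuples :: "nat \<Rightarrow> (nat \<Rightarrow> real^3) set" where
  "sphere_tuples n = {x. (\<forall>s<n. norm (x s) = 1) \<and> (\<forall>s\<ge>n. x s = 0)}"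

end

theory Submission
  imports Defs
begin

definition QQ :: "(nat \<Rightarrow> real^3) set \<Rightarrow> nat set \<Rightarrow> ((nat \<Rightarrow> real^3) \<Rightarrow> real) \<Rightarrow> real" where
  "QQ C S w = (\<Sum>x\<in>C. \<Sum>y\<in>C. w x * w y * (\<Prod>s\<in>S. (inner (x s) (y s))^2))"

lemma sq_inner: "(inner u v)^2 = (\<Sum>i\<in>UNIV. \<Sum>j\<in>UNIV. ((u $ i) * (u $ j)) * ((v $ i) * (v $ j)))" for u v :: "real^3"
  unfolding inner_vec_def power2_eq_square sum_product by (simp add: algebra_simps)

lemma QQ_insert:
  assumes "finite S" "t \<notin> S"
  shows "QQ C (insert t S) w = (\<Sum>i\<in>UNIV. \<Sum>j\<in>UNIV. QQ C S (\<lambda>x. w x * (x t $ i * x t $ j)))"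
proof -
  let ?P = "\<lambda>x y. (\<Prod>s\<in>S. (inner (x s) (y s))^2)"
  let ?g = "\<lambda>x y i j. (w x * (x t $ i * x t $ j)) * (w y * (y t $ i * y t $ j)) * ?P x y"
  have pt: "w x * w y * (\<Prod>s\<in>insert t S. (inner (x s) (y s))^2) = (\<Sum>i\<in>UNIV. \<Sum>j\<in>UNIV. ?g x y i j)" for x y
    using assms by (simp add: prod.insert sq_inner sum_distrib_left sum_distrib_right mult_ac)
  have "QQ C (insert t S) w = (\<Sum>x\<in>C. \<Sum>y\<in>C. \<Sum>i\<in>UNIV. \<Sum>j\<in>UNIV. ?g x y i j)"
    unfolding QQ_def using pt by simp
  also have "\<dots> = (\<Sum>x\<in>C. \<Sum>i\<in>UNIV. \<Sum>y\<in>C. \<Sum>j\<in>UNIV. ?g x y i j)"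
    by (rule sum.cong[OF refl], rule sum.swap)
  also have "\<dots> = (\<Sum>x\<in>C. \<Sum>i\<in>UNIV. \<Sum>j\<in>UNIV. \<Sum>y\<in>C. ?g x y i j)"
    by (rule sum.cong[OF refl], rule sum.cong[OF refl], rule sum.swap)
  also have "\<dots> = (\<Sum>i\<in>UNIV. \<Sum>x\<in>C. \<Sum>j\<in>UNIV. \<Sum>y\<in>C. ?g x y i j)"
    by (rule sum.swap)
  also have "\<dots> = (\<Sum>i\<in>UNIV. \<Sum>j\<in>UNIV. \<Sum>x\<in>C. \<Sum>y\<in>C. ?g x y i j)"
    by (rule sum.cong[OF refl], rule sum.swap)
  also have "\<dots> = (\<Sum>i\<in>UNIV. \<Sum>j\<in>UNIV. QQ C S (\<lambda>x. w x * (x t $ i * x t $ j)))"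
    unfolding QQ_def by simp
  finally show ?thesis .
qed

lemma QQ_empty: "QQ C {} w = (\<Sum>x\<in>C. w x)^2"
  unfolding QQ_def power2_eq_square sum_product by simp

lemma QQ_nonneg:
  assumes "finite S"
  shows "QQ C S w \<ge> 0"
  using assms
proof (induction S arbitrary: w rule: finite_induct)
  case empty
  then show ?case by (simp add: QQ_empty)
next
  case (insert t S)
  then show ?case by (simp add: QQ_insert sum_nonneg)
qed

lemma cs3: "(\<Sum>i\<in>(UNIV::3 set). (a i::real))^2 \<le> 3 * (\<Sum>i\<in>UNIV. (a i)^2)"
proof -
  have "0 \<le> (a 1 - a 2)^2 + (a 2 - a 3)^2 + (a 1 - a 3)^2" by simp
  then show ?thesis unfolding sum_3 by (simp add: power2_eq_square algebra_simps)
qed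

lemma QQ_lower:
  assumes "finite S" and "\<forall>x\<in>C. \<forall>s\<in>S. norm (x s) = 1"
  shows "QQ C S w \<ge> (\<Sum>x\<in>C. w x)^2 / 3 ^ card S"
  using assms
proof (induction S arbitrary: w rule: finite_induct)
  case empty
  then show ?case by (simp add: QQ_empty)
next
  case (insert t S)
  define a where "a i = (\<Sum>x\<in>C. w x * (x t $ i * x t $ i))" for i
  have IH: "QQ C S (\<lambda>x. w x * (x t $ i * x t $ i)) \<ge> (a i)^2 / 3 ^ card S" for i
    using insert.IH[of "\<lambda>x. w x * (x t $ i * x t $ i)"] insert.prems unfolding a_def by auto
  have "(\<Sum>i\<in>UNIV. QQ C S (\<lambda>x. w x * (x t $ i * x t $ i)))
      \<le> (\<Sum>i\<in>UNIV. \<Sum>j\<in>UNIV. QQ C S (\<lambda>x. w x * (x t $ i * x t $ j)))"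
    by (rule sum_mono, rule member_le_sum[where f="\<lambda>j. QQ C S (\<lambda>x. w x * (x t $ _ * x t $ j))"])
       (auto intro: QQ_nonneg insert.hyps)
  hence 1: "QQ C (insert t S) w \<ge> (\<Sum>i\<in>UNIV. (a i)^2 / 3 ^ card S)"
    using sum_mono[of UNIV "\<lambda>i. (a i)^2 / 3 ^ card S" "\<lambda>i. QQ C S (\<lambda>x. w x * (x t $ i * x t $ i))", OF IH]
    by (simp add: QQ_insert insert.hyps)
  have sa: "(\<Sum>i\<in>UNIV. a i) = (\<Sum>x\<in>C. w x)"
  proof -
    have "(\<Sum>i\<in>UNIV. a i) = (\<Sum>x\<in>C. w x * (\<Sum>i\<in>UNIV. x t $ i * x t $ i))"
      unfolding a_def by (simp add: sum_distrib_left sum.swap[of _ C])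
    also have "\<dots> = (\<Sum>x\<in>C. w x)"
    proof (rule sum.cong[OF refl])
      fix x assume "x \<in> C"
      then have "norm (x t) = 1" using insert.prems by auto
      then have "inner (x t) (x t) = 1" by (metis power2_norm_eq_inner power_one)
      then show "w x * (\<Sum>i\<in>UNIV. x t $ i * x t $ i) = w x" by (simp add: inner_vec_def)
    qed
    finally show ?thesis .
  qed
  have "(\<Sum>x\<in>C. w x)^2 / 3 ^ card (insert t S) = (\<Sum>i\<in>UNIV. a i)^2 / (3 * 3 ^ card S)"
    using insert.hyps sa by simp
  also have "\<dots> \<le> (3 * (\<Sum>i\<in>UNIV. (a i)^2)) / (3 * 3 ^ card S)"
    by (rule divide_right_mono[OF cs3], simp)
  also have "\<dots> = (\<Sum>i\<in>UNIV. (a i)^2 / 3 ^ card S)"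
    by (simp add: sum_divide_distrib)
  finally show ?case using 1 by linarith
qed

theorem mainTheorem8:
  fixes n :: nat and C :: "(nat \<Rightarrow> real^3) set" and S :: "nat set"
  assumes "C \<subseteq> sphere_tuples n" and "finite C" and "C \<noteq> {}"
    and "S \<subseteq> {0..<n}"
  shows "real (card {(x, y) \<in> C \<times> C. \<forall>s\<in>S. inner (x s) (y s) \<noteq> 0})
           / real (card C) ^ 2 \<ge> 3 powr (- real (card S))"
proof -
  let ?A = "{(x, y) \<in> C \<times> C. \<forall>s\<in>S. inner (x s) (y s) \<noteq> 0}"
  let ?P = "\<lambda>p. (\<Prod>s\<in>S. (inner (fst p s) (snd p s))^2)"
  have fS: "finite S" using assms(4) finite_subset by blast
  have unit: "\<forall>x\<in>C. \<forall>s\<in>S. norm (x s) = 1"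
    using assms(1,4) unfolding sphere_tuples_def by (force simp: subset_iff)
  have P01: "0 \<le> ?P p \<and> ?P p \<le> 1" if "p \<in> C \<times> C" for p
  proof -
    have "(inner (fst p s) (snd p s))^2 \<le> 1" if "s \<in> S" for s
    proof -
      have "\<bar>inner (fst p s) (snd p s)\<bar> \<le> norm (fst p s) * norm (snd p s)"
        by (rule Cauchy_Schwarz_ineq2)
      also have "\<dots> = 1" using unit `p \<in> C \<times> C` `s \<in> S` by (auto simp: mem_Times_iff)
      finally show ?thesis by (simp add: abs_square_le_1)
    qed
    then show ?thesis by (auto intro: prod_nonneg prod_le_1)
  qed
  have fA: "finite ?A" using assms(2) by (auto intro: finite_subset[of _ "C \<times> C"])
  have "QQ C S (\<lambda>_. 1) = (\<Sum>p\<in>C\<times>C. ?P p)"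
    unfolding QQ_def by (simp add: sum.cartesian_product case_prod_beta)
  also have "\<dots> = (\<Sum>p\<in>?A. ?P p)"
  proof (rule sum.mono_neutral_right)
    show "finite (C \<times> C)" using assms(2) by simp
    show "?A \<subseteq> C \<times> C" by auto
    show "\<forall>p\<in>C \<times> C - ?A. ?P p = 0" using fS by (auto simp: prod_zero_iff)
  qed
  also have "\<dots> \<le> (\<Sum>p\<in>?A. 1)" by (rule sum_mono) (use P01 in auto)
  also have "\<dots> = real (card ?A)" by simp
  finally have up: "QQ C S (\<lambda>_. 1) \<le> real (card ?A)" .
  have low: "QQ C S (\<lambda>_. 1) \<ge> real (card C)^2 / 3 ^ card S"
    using QQ_lower[OF fS unit, of "\<lambda>_. 1"] by simp
  have cpos: "real (card C) ^ 2 > 0" using assms(2,3) by (simp add: card_gt_0_iff)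
  have "3 powr (- real (card S)) = 1 / 3 ^ card S"
    by (simp add: powr_minus powr_realpow divide_inverse)
  also have "\<dots> = (real (card C)^2 / 3 ^ card S) / real (card C)^2" using cpos by simp
  also have "\<dots> \<le> real (card ?A) / real (card C)^2"
    by (rule divide_right_mono) (use up low cpos in auto)
  finally show ?thesis .
qed

end
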